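(* Let $Q_1=(U,R_1)$ be an interval order and $Q_2=(U,R_2)$ a partial order on the same finite set $U$, such that $Q_1$ and $Q_2$ do not contradict each other. Then there exists a linear order $Q_0$ on $U$ that is a linear extension of both $Q_1$ and $Q_2$.
   Context: An interval order is a partial order whose elements $x$ can be assigned real intervals $I_x$ such that $x<y$ iff $I_x$ lies entirely to the left of $I_y$. Two partial orders $Q_1,Q_2$ on $U$ contradict each other if there are $u,v\in U$ with $u<_{Q_1}v$ and $v<_{Q_2}u$. A linear order $Q_0$ is a linear extension of $Q$ if $u<_Q v$ implies $u<_{Q_0}v$. *)

theory Defs
  imports Main "HOL.Real"
begin

text \<open>Orders on a carrier set U are represented by their strict relation
  (pairs (u,v) meaning u < v).\<close>

definition strict_partial_order_on :: "'a set \<Rightarrow> 'a rel \<Rightarrow> bool" where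
  "strict_partial_order_on U R \<longleftrightarrow>
     R \<subseteq> U \<times> U \<and> (\<forall>x\<in>U. (x, x) \<notin> R) \<and> trans R"

definition interval_order_on :: "'a set \<Rightarrow> 'a rel \<Rightarrow> bool" where
  "interval_order_on U R \<longleftrightarrow> strict_partial_order_on U R \<and>
     (\<exists>(l :: 'a \<Rightarrow> real) (r :: 'a \<Rightarrow> real).
        (\<forall>x\<in>U. l x \<le> r x) \<and>
        (\<forall>x\<in>U. \<forall>y\<in>U. (x, y) \<in> R \<longleftrightarrow> r x < l y))"

definition strict_linear_order_on' :: "'a set \<Rightarrow> 'a rel \<Rightarrow> bool" where
  "strict_linear_order_on' U R \<longleftrightarrow> strict_partial_order_on U R \<and>
     (\<forall>x\<in>U. \<forall>y\<in>U. x \<noteq> y \<longrightarrow> (x, y) \<in> R \<or> (y, x) \<in> R)"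

definition contradict :: "'a rel \<Rightarrow> 'a rel \<Rightarrow> bool" where
  "contradict R1 R2 \<longleftrightarrow> (\<exists>u v. (u, v) \<in> R1 \<and> (v, u) \<in> R2)"

definition linear_extension :: "'a rel \<Rightarrow> 'a rel \<Rightarrow> bool" where
  "linear_extension R0 R \<longleftrightarrow> (\<forall>u v. (u, v) \<in> R \<longrightarrow> (u, v) \<in> R0)"

end

theory Submission
  imports Defs
begin

lemma topo_num:
  assumes fin: "finite A" and P: "finite P" "trans P" "\<forall>x. (x,x) \<notin> P"
  shows "\<exists>f::'a\<Rightarrow>nat. inj_on f A \<and> (\<forall>x\<in>A. \<forall>y\<in>A. (x,y)\<in>P \<longrightarrow> f x < f y)"
  using fin
proof (induction A rule: finite_remove_induct)
  case empty
  then show ?case by auto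
next
  case (remove A)
  have ac: "acyclic P" using P by (simp add: acyclic_def trancl_id)
  have wf: "wf (P\<inverse>)" using finite_acyclic_wf_converse[OF P(1) ac] .
  obtain m where m: "m \<in> A" "\<forall>y. (y,m) \<in> P\<inverse> \<longrightarrow> y \<notin> A"
    using wfE_min[OF wf, of _ A] remove.hyps(2) by (metis ex_in_conv)
  obtain f :: "'a \<Rightarrow> nat" where f: "inj_on f (A-{m})" "\<forall>x\<in>A-{m}. \<forall>y\<in>A-{m}. (x,y)\<in>P \<longrightarrow> f x < f y"
    using remove.IH[OF m(1)] by blast
  define g where "g x = (if x = m then Suc (Max (f ` (A-{m}))) else f x)" for x
  have le: "f x < g m" if "x \<in> A-{m}" for x
    using that remove.hyps(1) by (auto simp: g_def intro!: le_imp_less_Suc Max_ge)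
  have "inj_on g A"
    unfolding inj_on_def
  proof (intro ballI impI)
    fix x y assume xy: "x\<in>A" "y\<in>A" "g x = g y"
    show "x = y"
    proof (cases "x = m"; cases "y = m")
      assume "x \<noteq> m" "y \<noteq> m" then show ?thesis using xy f(1) by (auto simp: g_def inj_on_def)
    next
      assume "x = m" "y \<noteq> m" then show ?thesis using xy le[of y] by (auto simp: g_def)
    next
      assume "x \<noteq> m" "y = m" then show ?thesis using xy le[of x] by (auto simp: g_def)
    qed simp
  qed
  moreover have "\<forall>x\<in>A. \<forall>y\<in>A. (x,y)\<in>P \<longrightarrow> g x < g y"
  proof (intro ballI impI)
    fix x y assume xy: "x\<in>A" "y\<in>A" "(x,y)\<in>P"
    have "x \<noteq> m" using m(2) xy by auto
    show "g x < g y"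
    proof (cases "y = m")
      case True then show ?thesis using le[of x] \<open>x \<noteq> m\<close> xy by (auto simp: g_def)
    next
      case False then show ?thesis using f(2) \<open>x \<noteq> m\<close> xy by (auto simp: g_def)
    qed
  qed
  ultimately show ?case by blast
qed

theorem lemma10:
  fixes U :: "'a set" and R1 R2 :: "'a rel"
  assumes "finite U"
    and "interval_order_on U R1"
    and "strict_partial_order_on U R2"
    and "\<not> contradict R1 R2"
  shows "\<exists>R0. strict_linear_order_on' U R0 \<and> linear_extension R0 R1 \<and> linear_extension R0 R2"
proof -
  obtain l r :: "'a \<Rightarrow> real" where lr: "\<forall>x\<in>U. l x \<le> r x"
    "\<forall>x\<in>U. \<forall>y\<in>U. (x, y) \<in> R1 \<longleftrightarrow> r x < l y"
    using assms(2) unfolding interval_order_on_def by blast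
  have R1s: "R1 \<subseteq> U \<times> U" "\<forall>x\<in>U. (x,x)\<notin>R1" "trans R1"
    using assms(2) unfolding interval_order_on_def strict_partial_order_on_def by auto
  have R2s: "R2 \<subseteq> U \<times> U" "\<forall>x\<in>U. (x,x)\<notin>R2" "trans R2"
    using assms(3) unfolding strict_partial_order_on_def by auto
  have nc: "(u,v)\<in>R1 \<Longrightarrow> (v,u)\<in>R2 \<Longrightarrow> False" for u v
    using assms(4) unfolding contradict_def by blast
  have t22: "(a,d) \<in> R1 \<or> (c,b) \<in> R1" if "(a,b)\<in>R1" "(c,d)\<in>R1" for a b c d
  proof -
    have U: "a\<in>U" "b\<in>U" "c\<in>U" "d\<in>U" using that R1s(1) by auto
    have "r a < l b" "r c < l d" using that lr(2) U by auto
    then have "r a < l d \<or> r c < l b" by linarith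
    then show ?thesis using lr(2) U by auto
  qed
  have R121: "(a,d)\<in>R1" if "(a,b)\<in>R1" "(b,c)\<in>R2" "(c,d)\<in>R1" for a b c d
    using t22[OF that(1) that(3)] nc that(2) by blast
  define P where "P = R2 \<union> (R2\<^sup>= O R1 O R2\<^sup>=)"
  have PU: "P \<subseteq> U \<times> U" using R1s(1) R2s(1) unfolding P_def by blast
  have R2t: "(x,y)\<in>R2\<^sup>= \<Longrightarrow> (y,z)\<in>R2\<^sup>= \<Longrightarrow> (x,z)\<in>R2\<^sup>=" for x y z
    using transD[OF R2s(3)] by blast
  have R1t: "(x,y)\<in>R1 \<Longrightarrow> (y,z)\<in>R1 \<Longrightarrow> (x,z)\<in>R1" for x y z
    using transD[OF R1s(3)] by blast
  have R121': "(a,d)\<in>R1" if "(a,b)\<in>R1" "(b,c)\<in>R2\<^sup>=" "(c,d)\<in>R1" for a b c d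
  proof (cases "b = c")
    case True then show ?thesis using that(1,3) R1t by blast
  next
    case False then have "(b,c)\<in>R2" using that(2) by simp
    then show ?thesis using that(1,3) R121 by blast
  qed
  have "trans P"
  proof (rule transI)
    fix x y z assume xy: "(x,y)\<in>P" and yz: "(y,z)\<in>P"
    show "(x,z)\<in>P"
    proof (cases "(x,y)\<in>R2")
      case True
      then show ?thesis
      proof (cases "(y,z)\<in>R2")
        case True then show ?thesis using \<open>(x,y)\<in>R2\<close> transD[OF R2s(3)] unfolding P_def by blast
      next
        case False
        then obtain b c where "(y,b)\<in>R2\<^sup>=" "(b,c)\<in>R1" "(c,z)\<in>R2\<^sup>=" using yz unfolding P_def by blast
        then show ?thesis using True R2t[of x y b] unfolding P_def by blast
      qed
    next
      case False
      then obtain a b where ab: "(x,a)\<in>R2\<^sup>=" "(a,b)\<in>R1" "(b,y)\<in>R2\<^sup>=" using xy unfolding P_def by blast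
      show ?thesis
      proof (cases "(y,z)\<in>R2")
        case True then show ?thesis using ab R2t[of b y z] unfolding P_def by blast
      next
        case False
        then obtain c d where cd: "(y,c)\<in>R2\<^sup>=" "(c,d)\<in>R1" "(d,z)\<in>R2\<^sup>=" using yz unfolding P_def by blast
        have "(b,c)\<in>R2\<^sup>=" using R2t[OF ab(3) cd(1)] .
        then have "(a,d)\<in>R1" using R121' ab(2) cd(2) by blast
        then show ?thesis using ab(1) cd(3) unfolding P_def by blast
      qed
    qed
  qed
  have irr: "\<forall>x. (x,x)\<notin>P"
  proof (intro allI notI)
    fix x assume "(x,x)\<in>P"
    then show False
    proof (cases "(x,x)\<in>R2")
      case True then show ?thesis using R2s(1,2) by blast
    next
      case False
      then obtain a b where ab: "(x,a)\<in>R2\<^sup>=" "(a,b)\<in>R1" "(b,x)\<in>R2\<^sup>=" using \<open>(x,x)\<in>P\<close> unfolding P_def by blast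
      have "(b,a)\<in>R2\<^sup>=" using R2t[OF ab(3) ab(1)] .
      then show False using ab(2) nc R1s(1,2) by auto
    qed
  qed
  have finP: "finite P" using PU assms(1) by (meson finite_SigmaI finite_subset)
  obtain f :: "'a \<Rightarrow> nat" where f: "inj_on f U" "\<forall>x\<in>U. \<forall>y\<in>U. (x,y)\<in>P \<longrightarrow> f x < f y"
    using topo_num[OF assms(1) finP \<open>trans P\<close> irr] by blast
  define R0 where "R0 = {(x,y). x\<in>U \<and> y\<in>U \<and> f x < f y}"
  have "strict_linear_order_on' U R0"
    unfolding strict_linear_order_on'_def strict_partial_order_on_def R0_def
  proof (intro conjI ballI impI)
    show "trans {(x, y). x \<in> U \<and> y \<in> U \<and> f x < f y}" by (auto intro: transI)
  next
    fix x y assume "x\<in>U" "y\<in>U" "x\<noteq>y"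
    then have "f x \<noteq> f y" using f(1) by (auto simp: inj_on_def)
    then show "(x, y) \<in> {(x, y). x \<in> U \<and> y \<in> U \<and> f x < f y} \<or> (y, x) \<in> {(x, y). x \<in> U \<and> y \<in> U \<and> f x < f y}"
      using \<open>x\<in>U\<close> \<open>y\<in>U\<close> by auto
  qed auto
  moreover have "linear_extension R0 R1"
    unfolding linear_extension_def
  proof (intro allI impI)
    fix u v assume uv: "(u,v)\<in>R1"
    then have "(u,v)\<in>P" "u\<in>U" "v\<in>U" using R1s(1) unfolding P_def by auto
    then show "(u,v)\<in>R0" using f(2) unfolding R0_def by blast
  qed
  moreover have "linear_extension R0 R2"
    unfolding linear_extension_def
  proof (intro allI impI)
    fix u v assume uv: "(u,v)\<in>R2"
    then have "(u,v)\<in>P" "u\<in>U" "v\<in>U" using R2s(1) unfolding P_def by auto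
    then show "(u,v)\<in>R0" using f(2) unfolding R0_def by blast
  qed
  ultimately show ?thesis by blast
qed

end
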